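(* Let $n\ge 25$ and let $S_n$ be the star graph with vertices $a_1,\dots,a_n$ and center $a_1$. Then $$\lim_{p\to\infty}\|M_{S_n}\|_p^p=\frac{1+\sqrt{n}}{2}.$$
   Context: For a finite connected graph $G=(V,E)$ with graph distance $d_G$ and $f:V\to\mathbb{R}$, $M_Gf(v)=\sup_{r\geq 0}\frac{1}{|B(v,r)|}\sum_{u\in B(v,r)}|f(u)|$, where $B(v,r)=\{u\in V: d_G(u,v)\le r\}$. For $g:V\to\mathbb{R}$, $\|g\|_p=(\sum_{v\in V}|g(v)|^p)^{1/p}$ and $\|M_G\|_p=\sup_{f\neq 0}\|M_Gf\|_p/\|f\|_p$. The star graph $S_n$ has vertices $a_1,\dots,a_n$ and edges exactly between $a_1$ and each $a_i$, $i\ge 2$. *)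

theory Defs
  imports "HOL-Analysis.Analysis"
begin

definition edge_rel :: "'a set \<Rightarrow> ('a \<Rightarrow> 'a \<Rightarrow> bool) \<Rightarrow> ('a \<times> 'a) set" where
  "edge_rel V E = {(x, y). x \<in> V \<and> y \<in> V \<and> E x y}"

text \<open>Graph distance: length of a shortest walk (graph assumed connected).\<close>
definition graph_dist :: "'a set \<Rightarrow> ('a \<Rightarrow> 'a \<Rightarrow> bool) \<Rightarrow> 'a \<Rightarrow> 'a \<Rightarrow> nat" where
  "graph_dist V E u v = (LEAST k. (u, v) \<in> edge_rel V E ^^ k)"

definition gball :: "'a set \<Rightarrow> ('a \<Rightarrow> 'a \<Rightarrow> bool) \<Rightarrow> 'a \<Rightarrow> real \<Rightarrow> 'a set" where
  "gball V E v r = {u \<in> V. real (graph_dist V E u v) \<le> r}"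

definition maxop :: "'a set \<Rightarrow> ('a \<Rightarrow> 'a \<Rightarrow> bool) \<Rightarrow> ('a \<Rightarrow> real) \<Rightarrow> 'a \<Rightarrow> real" where
  "maxop V E f v = (SUP r\<in>{0..}. (\<Sum>u\<in>gball V E v r. \<bar>f u\<bar>) / real (card (gball V E v r)))"

definition pnorm :: "'a set \<Rightarrow> real \<Rightarrow> ('a \<Rightarrow> real) \<Rightarrow> real" where
  "pnorm V p g = (\<Sum>v\<in>V. \<bar>g v\<bar> powr p) powr (1 / p)"

definition maxop_norm :: "'a set \<Rightarrow> ('a \<Rightarrow> 'a \<Rightarrow> bool) \<Rightarrow> real \<Rightarrow> real" where
  "maxop_norm V E p = (SUP f\<in>{f. \<exists>v\<in>V. f v \<noteq> 0}. pnorm V p (maxop V E f) / pnorm V p f)"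

definition star_V :: "nat \<Rightarrow> nat set" where
  "star_V n = {1..n}"

definition star_E :: "nat \<Rightarrow> nat \<Rightarrow> bool" where
  "star_E x y = ((x = 1 \<and> y \<ge> 2) \<or> (y = 1 \<and> x \<ge> 2))"

end

theory Submission
  imports Defs "HOL-Analysis.Analysis" "HOL-Real_Asymp.Real_Asymp"
begin


lemma star_R_iff: "(x,y) \<in> edge_rel (star_V n) star_E \<longleftrightarrow>
   x \<in> {1..n} \<and> y \<in> {1..n} \<and> ((x = 1 \<and> y \<ge> 2) \<or> (y = 1 \<and> x \<ge> 2))"
  by (simp add: edge_rel_def star_V_def star_E_def)

lemma dist_self: "graph_dist V E u u = 0"
  unfolding graph_dist_def by (rule Least_equality) auto

lemma dist_center_leaf:
  assumes "i \<in> {2..n}"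
  shows "graph_dist (star_V n) star_E 1 i = 1" "graph_dist (star_V n) star_E i 1 = 1"
proof -
  have ne: "i \<noteq> 1" using assms by auto
  show "graph_dist (star_V n) star_E 1 i = 1"
    unfolding graph_dist_def
  proof (rule Least_equality)
    show "(1, i) \<in> edge_rel (star_V n) star_E ^^ 1" using assms by (simp add: star_R_iff)
    fix y assume "(1, i) \<in> edge_rel (star_V n) star_E ^^ y"
    then show "1 \<le> y" using ne by (cases y) auto
  qed
  show "graph_dist (star_V n) star_E i 1 = 1"
    unfolding graph_dist_def
  proof (rule Least_equality)
    show "(i, 1) \<in> edge_rel (star_V n) star_E ^^ 1" using assms by (simp add: star_R_iff)
    fix y assume "(i, 1) \<in> edge_rel (star_V n) star_E ^^ y"
    then show "1 \<le> y" using ne by (cases y) auto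
  qed
qed

lemma dist_leaf_leaf:
  assumes "i \<in> {2..n}" "j \<in> {2..n}" "i \<noteq> j"
  shows "graph_dist (star_V n) star_E i j = 2"
  unfolding graph_dist_def
proof (rule Least_equality)
  have "(i,1) \<in> edge_rel (star_V n) star_E" "(1,j) \<in> edge_rel (star_V n) star_E"
    using assms by (auto simp add: star_R_iff)
  then show "(i, j) \<in> edge_rel (star_V n) star_E ^^ 2"
    by (auto simp: numeral_2_eq_2 relpow_Suc_I)
next
  fix y assume h: "(i, j) \<in> edge_rel (star_V n) star_E ^^ y"
  show "2 \<le> y"
  proof (rule ccontr)
    assume "\<not> 2 \<le> y"
    then have "y = 0 \<or> y = 1" by auto
    then show False using h assms by (auto simp: star_R_iff)
  qed
qed



lemma mem_star_V: "u \<in> star_V n \<longleftrightarrow> 1 \<le> u \<and> u \<le> n"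
  by (simp add: star_V_def)

lemma dist_to_center:
  assumes "u \<in> star_V n"
  shows "graph_dist (star_V n) star_E u 1 = (if u = 1 then 0 else 1)"
  using assms dist_self dist_center_leaf[of u n] by (auto simp: star_V_def)

lemma dist_to_leaf:
  assumes "u \<in> star_V n" "i \<in> {2..n}"
  shows "graph_dist (star_V n) star_E u i = (if u = i then 0 else if u = 1 then 1 else 2)"
  using assms dist_self dist_center_leaf[of i n] dist_leaf_leaf[of u n i] by (auto simp: star_V_def)

lemma ball_center:
  assumes "r \<ge> 0" "n \<ge> 1"
  shows "gball (star_V n) star_E 1 r = (if r < 1 then {1} else star_V n)"
  using assms unfolding gball_def by (auto simp: dist_to_center[simplified] mem_star_V split: if_splits)

lemma ball_leaf:
  assumes "r \<ge> 0" "i \<in> {2..n}"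
  shows "gball (star_V n) star_E i r =
     (if r < 1 then {i} else if r < 2 then {1,i} else star_V n)"
  using assms unfolding gball_def by (auto simp: dist_to_leaf[simplified] mem_star_V split: if_splits)



lemma card_star_V[simp]: "card (star_V n) = n" by (simp add: star_V_def)

lemma Sup2: "Sup {a, b::real} = max a b"
  by (simp add: cSup_eq_Max)
lemma Sup3: "Sup {a, b, c::real} = max (max a b) c"
  by (simp add: cSup_eq_Max max.assoc max.commute max.left_commute)

lemma maxop_center:
  assumes "n \<ge> 2"
  shows "maxop (star_V n) star_E f 1 = max \<bar>f 1\<bar> ((\<Sum>u\<in>star_V n. \<bar>f u\<bar>) / real n)"
proof -
  let ?h = "\<lambda>r. (\<Sum>u\<in>gball (star_V n) star_E 1 r. \<bar>f u\<bar>) / real (card (gball (star_V n) star_E 1 r))"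
  let ?A = "(\<Sum>u\<in>star_V n. \<bar>f u\<bar>) / real n"
  have hlt: "?h r = \<bar>f 1\<bar>" if "0 \<le> r" "r < 1" for r
  proof -
    have "gball (star_V n) star_E 1 r = {1}" using ball_center[of r n] that assms by simp
    then show ?thesis by simp
  qed
  have hge: "?h r = ?A" if "1 \<le> r" for r
  proof -
    have "gball (star_V n) star_E 1 r = star_V n" using ball_center[of r n] that assms by simp
    then show ?thesis by simp
  qed
  have "?h ` {0..} = {\<bar>f 1\<bar>, ?A}"
  proof (intro equalityI subsetI)
    fix y assume "y \<in> ?h ` {0..}"
    then obtain r where r: "r \<ge> 0" "y = ?h r" by auto
    show "y \<in> {\<bar>f 1\<bar>, ?A}"
    proof (cases "r < 1")
      case True then show ?thesis using r hlt[of r] by simp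
    next
      case False then show ?thesis using r hge[of r] by simp
    qed
  next
    fix y assume "y \<in> {\<bar>f 1\<bar>, ?A}"
    then have "y = ?h 0 \<or> y = ?h 1" using hlt[of 0] hge[of 1] by auto
    then show "y \<in> ?h ` {0..}" by force
  qed
  then show ?thesis unfolding maxop_def by (simp only: Sup2)
qed

lemma maxop_leaf:
  assumes "i \<in> {2..n}"
  shows "maxop (star_V n) star_E f i = max (max \<bar>f i\<bar> ((\<bar>f i\<bar> + \<bar>f 1\<bar>)/2)) ((\<Sum>u\<in>star_V n. \<bar>f u\<bar>) / real n)"
proof -
  let ?h = "\<lambda>r. (\<Sum>u\<in>gball (star_V n) star_E i r. \<bar>f u\<bar>) / real (card (gball (star_V n) star_E i r))"
  let ?A = "(\<Sum>u\<in>star_V n. \<bar>f u\<bar>) / real n"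
  let ?B = "(\<bar>f i\<bar> + \<bar>f 1\<bar>)/2"
  have ne: "i \<noteq> 1" using assms by auto
  have h0: "?h r = \<bar>f i\<bar>" if "0 \<le> r" "r < 1" for r
  proof -
    have "gball (star_V n) star_E i r = {i}" using ball_leaf[of r i n] that assms by simp
    then show ?thesis by simp
  qed
  have h1: "?h r = ?B" if "1 \<le> r" "r < 2" for r
  proof -
    have "gball (star_V n) star_E i r = {1, i}" using ball_leaf[of r i n] that assms by simp
    then show ?thesis using ne by (simp add: add.commute)
  qed
  have h2: "?h r = ?A" if "2 \<le> r" for r
  proof -
    have "gball (star_V n) star_E i r = star_V n" using ball_leaf[of r i n] that assms by simp
    then show ?thesis by simp
  qed
  have "?h ` {0..} = {\<bar>f i\<bar>, ?B, ?A}"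
  proof (intro equalityI subsetI)
    fix y assume "y \<in> ?h ` {0..}"
    then obtain r where r: "r \<ge> 0" "y = ?h r" by auto
    show "y \<in> {\<bar>f i\<bar>, ?B, ?A}"
    proof (cases "r < 1")
      case True then show ?thesis using r h0[of r] by simp
    next
      case False
      show ?thesis
      proof (cases "r < 2")
        case True then show ?thesis using r False h1[of r] by simp
      next
        case F2: False then show ?thesis using r h2[of r] by simp
      qed
    qed
  next
    fix y assume "y \<in> {\<bar>f i\<bar>, ?B, ?A}"
    then have "y = ?h 0 \<or> y = ?h 1 \<or> y = ?h 2" using h0[of 0] h1[of 1] h2[of 2] by (metis (no_types, lifting) insert_iff singletonD order_refl zero_le_one one_le_numeral one_less_numeral_iff semiring_norm(76) zero_less_one)
    then show "y \<in> ?h ` {0..}" by force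
  qed
  then show ?thesis unfolding maxop_def by (simp only: Sup3)
qed



lemma leaf_bound:
  fixes \<theta> b h g K \<alpha> :: real
  assumes "\<theta> \<ge> 1" "b \<ge> 0" "h \<ge> 0" "h^2 \<le> K*\<alpha>*b" "g \<ge> 0" "K \<ge> 0" "\<alpha> \<ge> 0"
  shows "max (max b h) g \<le> \<theta>*b + max g (K*\<alpha>/(4*\<theta>))"
proof -
  have t0: "\<theta> > 0" using assms by simp
  have "(4*\<theta>*h)^2 \<le> (4*\<theta>^2*b + K*\<alpha>)^2"
  proof -
    have "(4*\<theta>*h)^2 = 16*\<theta>^2*h^2" by (simp add: power2_eq_square)
    also have "\<dots> \<le> 16*\<theta>^2*(K*\<alpha>*b)" using assms(4) by (simp add: mult_left_mono)
    also have "\<dots> \<le> (4*\<theta>^2*b + K*\<alpha>)^2"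
      using sum_squares_ge_zero[of "4*\<theta>^2*b - K*\<alpha>" 0] by (simp add: power2_eq_square algebra_simps)
    finally show ?thesis .
  qed
  then have "4*\<theta>*h \<le> 4*\<theta>^2*b + K*\<alpha>"
    by (rule power2_le_imp_le) (use assms t0 in simp)
  then have hb: "h \<le> \<theta>*b + K*\<alpha>/(4*\<theta>)" using t0 by (simp add: field_simps power2_eq_square)
  have "K*\<alpha>/(4*\<theta>) \<le> max g (K*\<alpha>/(4*\<theta>))" by simp
  moreover have "b \<le> \<theta>*b" using assms by (simp add: mult_le_cancel_right1)
  moreover have "0 \<le> max g (K*\<alpha>/(4*\<theta>))" using assms by simp
  moreover have "\<theta>*b \<ge> 0" using assms by simp
  ultimately show ?thesis using hb by (auto simp: max_def)
qed

lemma case3: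
  fixes r \<alpha> g K S :: real
  assumes r4: "r \<ge> 4" and K1: "K \<ge> 1" and a0: "\<alpha> > 0"
    and gl: "K*\<alpha>/(2*(1+r)) < g" and gS: "r^2*g \<le> S"
  shows "\<alpha> + (K*\<alpha>/(4*g))*(S - \<alpha>) + (r^2-1)*g \<le> (1+r)/2*S + \<alpha>*(r-1)*(K-1)/2"
proof -
  define \<theta> where "\<theta> = K*\<alpha>/(4*g)"
  have g0: "g > 0" using gl a0 K1 r4 by (smt (verit) divide_pos_pos mult_pos_pos)
  have th: "4*g*\<theta> = K*\<alpha>" using g0 by (simp add: \<theta>_def)
  have "K*\<alpha> < 2*(1+r)*g" using gl r4 by (simp add: field_simps)
  then have "4*g*\<theta> < 4*g*((1+r)/2)" using th by (simp add: algebra_simps)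
  then have thL: "\<theta> < (1+r)/2" using g0 by simp
  have f1: "2*(1+r)*g - K*\<alpha> > 0" using \<open>K*\<alpha> < 2*(1+r)*g\<close> by simp
  have "(r^2-2*r+2)*K*\<alpha> \<ge> 2*(1+r)*\<alpha>"
  proof -
    have "r*r \<ge> 4*r" using r4 by (intro mult_right_mono) auto
    then have q: "r^2-2*r+2 \<ge> 2*(1+r)" by (smt (verit) power2_eq_square)
    moreover have "(r^2-2*r+2)*K \<ge> (r^2-2*r+2)*1" using K1 r4 q by (intro mult_left_mono) auto
    ultimately show ?thesis using a0 by (smt (verit) mult_right_mono)
  qed
  then have f2: "(r^2-2*r+2)*g - \<alpha> > 0"
  proof -
    have "r*r \<ge> 4*r" using r4 by (intro mult_right_mono) auto
    then have q: "r^2-2*r+2 > 0" using r4 by (smt (verit) power2_eq_square)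
    have "(r^2-2*r+2)*(2*(1+r)*g) > (r^2-2*r+2)*(K*\<alpha>)"
      using \<open>K*\<alpha> < 2*(1+r)*g\<close> q by (intro mult_strict_left_mono) auto
    then have "2*(1+r)*((r^2-2*r+2)*g) > 2*(1+r)*\<alpha>" using \<open>(r^2-2*r+2)*K*\<alpha> \<ge> 2*(1+r)*\<alpha>\<close>
      by (simp add: algebra_simps)
    then show ?thesis using r4 by simp
  qed
  have P: "(2*(1+r)*g - K*\<alpha>)*((r^2-2*r+2)*g - \<alpha>) \<ge> 0" using f1 f2 by simp
  have "((1+r)/2 - \<theta>)*S \<ge> ((1+r)/2 - \<theta>)*(r^2*g)" using thL gS by (intro mult_left_mono) auto
  moreover have "4*g*(((1+r)/2 - \<theta>)*(r^2*g) - (\<alpha> - \<theta>*\<alpha> + (r^2-1)*g - \<alpha>*(r-1)*(K-1)/2))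
      = (2*(1+r)*g - K*\<alpha>)*((r^2-2*r+2)*g - \<alpha>)"
  proof -
    have "4*g*(((1+r)/2 - \<theta>)*(r^2*g) - (\<alpha> - \<theta>*\<alpha> + (r^2-1)*g - \<alpha>*(r-1)*(K-1)/2))
      = (2*(1+r)*g - 4*g*\<theta>)*(r^2*g) - (4*g*\<alpha> - (4*g*\<theta>)*\<alpha> + 4*(r^2-1)*g*g - 2*g*\<alpha>*(r-1)*(K-1))"
      by (simp add: field_simps)
    also have "\<dots> = (2*(1+r)*g - K*\<alpha>)*(r^2*g) - (4*g*\<alpha> - (K*\<alpha>)*\<alpha> + 4*(r^2-1)*g*g - 2*g*\<alpha>*(r-1)*(K-1))"
      by (simp only: th)
    also have "\<dots> = (2*(1+r)*g - K*\<alpha>)*((r^2-2*r+2)*g - \<alpha>)"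
      by (simp add: algebra_simps power2_eq_square)
    finally show ?thesis .
  qed
  ultimately have "4*g*(((1+r)/2 - \<theta>)*S - (\<alpha> - \<theta>*\<alpha> + (r^2-1)*g - \<alpha>*(r-1)*(K-1)/2)) \<ge> 0"
    using P g0 by (smt (verit) mult_left_mono)
  then have "((1+r)/2 - \<theta>)*S - (\<alpha> - \<theta>*\<alpha> + (r^2-1)*g - \<alpha>*(r-1)*(K-1)/2) \<ge> 0"
    using g0 by (simp add: zero_le_mult_iff)
  then show ?thesis unfolding \<theta>_def[symmetric] by (simp add: algebra_simps)
qed

lemma key:
  fixes r \<alpha> g K T0 :: real and I :: "nat set" and \<beta> h T :: "nat \<Rightarrow> real"
  assumes r4: "r \<ge> 4" and fin: "finite I" and cardI: "real (card I) = r^2 - 1"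
    and a0: "\<alpha> \<ge> 0" and b0: "\<And>i. i\<in>I \<Longrightarrow> \<beta> i \<ge> 0" and h0: "\<And>i. i\<in>I \<Longrightarrow> h i \<ge> 0"
    and hsq: "\<And>i. i\<in>I \<Longrightarrow> (h i)^2 \<le> K*\<alpha>*\<beta> i"
    and g0: "g \<ge> 0" and gS: "r^2 * g \<le> \<alpha> + (\<Sum>i\<in>I. \<beta> i)" and K1: "1 \<le> K" and K4: "K \<le> 4"
    and T0: "T0 \<le> max \<alpha> g" and Ti: "\<And>i. i\<in>I \<Longrightarrow> T i \<le> max (max (\<beta> i) (h i)) g"
  shows "T0 + (\<Sum>i\<in>I. T i) \<le> ((1+r)/2 + (K-1)*r^2) * (\<alpha> + (\<Sum>i\<in>I. \<beta> i))"
proof -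
  define B where "B = (\<Sum>i\<in>I. \<beta> i)"
  define S where "S = \<alpha> + B"
  have B0: "B \<ge> 0" unfolding B_def using b0 by (simp add: sum_nonneg)
  have S0: "S \<ge> 0" using B0 a0 by (simp add: S_def)
  have sumT: "(\<Sum>i\<in>I. T i) \<le> \<theta>*B + (r^2-1) * max g (K*\<alpha>/(4*\<theta>))" if th1: "\<theta> \<ge> 1" for \<theta>
  proof -
    have "(\<Sum>i\<in>I. T i) \<le> (\<Sum>i\<in>I. \<theta>*\<beta> i + max g (K*\<alpha>/(4*\<theta>)))"
    proof (rule sum_mono)
      fix i assume i: "i \<in> I"
      show "T i \<le> \<theta>*\<beta> i + max g (K*\<alpha>/(4*\<theta>))"
        using order_trans[OF Ti[OF i] leaf_bound[OF th1 b0[OF i] h0[OF i] hsq[OF i] g0 _ a0]] K1 by simp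
    qed
    also have "\<dots> = \<theta>*B + (r^2-1) * max g (K*\<alpha>/(4*\<theta>))"
      by (simp add: sum.distrib sum_distrib_left B_def cardI)
    finally show ?thesis .
  qed
  have r2: "r^2 \<ge> 16" using mult_mono[OF r4 r4] r4 by (simp add: power2_eq_square)
  have Pos: "\<alpha>*(r-1)*(K-1)/2 \<ge> 0" using a0 r4 K1 by simp
  have r1: "r^2 - 1 \<ge> 0" using r2 by simp
  have L2: "2 \<le> (1+r)/2" using r4 by simp
  have E0: "(K-1)*r^2*S \<ge> 0" using K1 S0 by simp
  have "T0 + (\<Sum>i\<in>I. T i) \<le> (1+r)/2 * S + \<alpha>*(r-1)*(K-1)/2"
  proof (cases "\<alpha> \<le> g")
    case True
    have "K*\<alpha> \<le> 4*\<alpha>" using K4 a0 by (rule mult_right_mono)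
    then have "max g (K*\<alpha>/4) \<le> g" using True by simp
    then have "(r^2-1)*max g (K*\<alpha>/4) \<le> (r^2-1)*g" using r1 by (rule mult_left_mono)
    then have "(\<Sum>i\<in>I. T i) \<le> B + (r^2-1)*g" using sumT[of 1] by simp
    moreover have "T0 \<le> g" using T0 True by simp
    ultimately have "T0 + (\<Sum>i\<in>I. T i) \<le> B + r^2*g" by (simp add: algebra_simps)
    also have "\<dots> \<le> 2*S" using gS a0 by (simp add: S_def B_def)
    also have "\<dots> \<le> (1+r)/2 * S" using L2 S0 by (intro mult_right_mono) auto
    finally show ?thesis using Pos by simp
  next
    case False
    then have ga: "g < \<alpha>" by simp
    have T0a: "T0 \<le> \<alpha>" using T0 ga by simp
    show ?thesis
    proof (cases "K*\<alpha>/4 < g")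
      case True
      have "max g (K*\<alpha>/4) \<le> g" using True by simp
      then have "(r^2-1)*max g (K*\<alpha>/4) \<le> (r^2-1)*g" using r1 by (rule mult_left_mono)
      then have "(\<Sum>i\<in>I. T i) \<le> B + (r^2-1)*g" using sumT[of 1] by simp
      then have "T0 + (\<Sum>i\<in>I. T i) \<le> S + r^2*g" using T0a g0 by (simp add: S_def algebra_simps)
      also have "\<dots> \<le> 2*S" using gS by (simp add: S_def B_def)
      also have "\<dots> \<le> (1+r)/2 * S" using L2 S0 by (intro mult_right_mono) auto
      finally show ?thesis using Pos by simp
    next
      case F2: False
      show ?thesis
      proof (cases "g \<le> K*\<alpha>/(2*(1+r))")
        case True
        have e: "K*\<alpha>/(4*((1+r)/2)) = K*\<alpha>/(2*(1+r))" using r4 by (simp add: field_simps)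
        have "max g (K*\<alpha>/(4*((1+r)/2))) = K*\<alpha>/(2*(1+r))" using True e by simp
        then have "(\<Sum>i\<in>I. T i) \<le> (1+r)/2*B + (r^2-1)*(K*\<alpha>/(2*(1+r)))"
          using sumT[of "(1+r)/2"] L2 by simp
        also have "(r^2-1)*(K*\<alpha>/(2*(1+r))) = (r-1)*K*\<alpha>/2"
          using r4 by (simp add: field_simps power2_eq_square)
        finally have "T0 + (\<Sum>i\<in>I. T i) \<le> \<alpha> + (1+r)/2*B + (r-1)*K*\<alpha>/2" using T0a by simp
        also have "\<dots> = (1+r)/2 * S + \<alpha>*(r-1)*(K-1)/2" by (simp add: S_def field_simps)
        finally show ?thesis .
      next
        case F3: False
        have "K*\<alpha>/(2*(1+r)) \<ge> 0" using K1 a0 r4 by simp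
        then have gpos: "g > 0" using F3 by simp
        have apos: "\<alpha> > 0" using ga g0 by simp
        define \<theta> where "\<theta> = K*\<alpha>/(4*g)"
        have th1: "\<theta> \<ge> 1" using F2 gpos by (simp add: \<theta>_def field_simps)
        have "K*\<alpha>/(4*\<theta>) = g" using gpos apos K1 by (simp add: \<theta>_def field_simps)
        then have "(\<Sum>i\<in>I. T i) \<le> \<theta>*B + (r^2-1)*g" using sumT[OF th1] by simp
        then have "T0 + (\<Sum>i\<in>I. T i) \<le> \<alpha> + \<theta>*(S-\<alpha>) + (r^2-1)*g" using T0a by (simp add: S_def)
        also have "\<dots> \<le> (1+r)/2*S + \<alpha>*(r-1)*(K-1)/2"
          unfolding \<theta>_def
          by (rule case3[OF r4 K1 apos]) (use F3 gS in \<open>auto simp: S_def B_def\<close>)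
        finally show ?thesis .
      qed
    qed
  qed
  also have "\<alpha>*(r-1)*(K-1)/2 \<le> (K-1)*r^2*S"
  proof -
    have "\<alpha>*(r-1)*(K-1)/2 \<le> S*(r-1)*(K-1)/2" using a0 B0 r4 K1 by (simp add: S_def mult_right_mono)
    also have "\<dots> \<le> S*r^2*(K-1)"
    proof -
      have "r \<le> r^2" using mult_right_mono[of 1 r r] r4 by (simp add: power2_eq_square)
      then have "(r-1)/2 \<le> r^2" using r2 r4 by simp
      moreover have "S*(K-1) \<ge> 0" using S0 K1 by simp
      ultimately have "(S*(K-1))*((r-1)/2) \<le> (S*(K-1))*r^2" by (rule mult_left_mono)
      then show ?thesis by (simp add: algebra_simps)
    qed
    finally show ?thesis by (simp add: algebra_simps)
  qed
  finally show ?thesis by (simp add: S_def B_def algebra_simps)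
qed



lemma half_bound:
  fixes p \<delta> u :: real
  assumes d0: "0 < \<delta>" and d1: "\<delta> < 1" and p0: "p > 0" and u0: "0 \<le> u" and u1: "u \<le> 1"
  shows "((1+u)/2) powr p \<le> ((2-\<delta>)^2/(4*(1-\<delta>))) powr (p/2) * u powr (p/2) + (1 - \<delta>/2) powr p"
proof (cases "u \<le> 1 - \<delta>")
  case True
  have "((1+u)/2) powr p \<le> (1 - \<delta>/2) powr p"
    using True u0 p0 by (intro powr_mono2) auto
  moreover have "0 \<le> ((2-\<delta>)^2/(4*(1-\<delta>))) powr (p/2) * u powr (p/2)" by simp
  ultimately show ?thesis by linarith
next
  case False
  let ?c = "(2-\<delta>)^2/(4*(1-\<delta>))"
  have id: "(2-\<delta>)^2*u - (1-\<delta>)*(1+u)^2 = (u-(1-\<delta>))*(1-(1-\<delta>)*u)"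
    by (simp add: algebra_simps power2_eq_square)
  have "(1-\<delta>)*u \<le> 1*1" using u1 d0 d1 u0 by (intro mult_mono) auto
  then have "(u-(1-\<delta>))*(1-(1-\<delta>)*u) \<ge> 0" using False by simp
  then have "(1-\<delta>)*(1+u)^2 \<le> (2-\<delta>)^2*u" using id by simp
  then have sq: "((1+u)/2)^2 \<le> ?c * u" using d1 by (simp add: field_simps power2_eq_square)
  have e: "((1+u)/2) powr 2 = ((1+u)/2)^2" using u0 by (simp add: powr_numeral)
  have "((1+u)/2) powr p = (((1+u)/2) powr 2) powr (p/2)"
    by (simp add: powr_powr)
  also have "\<dots> = (((1+u)/2)^2) powr (p/2)" by (simp only: e)
  also have "\<dots> \<le> (?c * u) powr (p/2)" using sq p0 by (intro powr_mono2) auto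
  also have "\<dots> = ?c powr (p/2) * u powr (p/2)" by (rule powr_mult)
  finally have "((1+u)/2) powr p \<le> ?c powr (p/2) * u powr (p/2)" .
  moreover have "0 \<le> (1 - \<delta>/2) powr p" by simp
  ultimately show ?thesis by linarith
qed

lemma half_scaled:
  fixes p \<delta> x a :: real
  assumes d0: "0 < \<delta>" and d1: "\<delta> < 1" and p0: "p > 0" and x0: "0 \<le> x" and xa: "x \<le> a"
  shows "((x+a)/2) powr p \<le> ((2-\<delta>)^2/(4*(1-\<delta>))) powr (p/2) * (a*x) powr (p/2) + (1 - \<delta>/2) powr p * a powr p"
proof (cases "a = 0")
  case True
  then have "x = 0" using x0 xa by simp
  then show ?thesis using True by simp
next
  case False
  then have a0: "a > 0" using x0 xa by simp
  let ?c = "(2-\<delta>)^2/(4*(1-\<delta>))"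
  let ?u = "x / a"
  have u0: "0 \<le> ?u" and u1: "?u \<le> 1" using a0 x0 xa by auto
  have "(x+a)/2 = a * ((1+?u)/2)" using a0 by (simp add: field_simps)
  then have "((x+a)/2) powr p = (a * ((1+?u)/2)) powr p" by (simp only:)
  also have "\<dots> = a powr p * ((1+?u)/2) powr p" by (rule powr_mult)
  also have "\<dots> \<le> a powr p * (?c powr (p/2) * ?u powr (p/2) + (1 - \<delta>/2) powr p)"
    by (intro mult_left_mono half_bound[OF d0 d1 p0 u0 u1]) simp
  also have "\<dots> = ?c powr (p/2) * ((a powr (p/2) * a powr (p/2)) * ?u powr (p/2)) + (1 - \<delta>/2) powr p * a powr p"
    by (simp add: algebra_simps powr_add[symmetric])
  also have "(a powr (p/2) * a powr (p/2)) * ?u powr (p/2) = (a*x) powr (p/2)"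
  proof -
    have "(a powr (p/2) * a powr (p/2)) * ?u powr (p/2) = (a * a * ?u) powr (p/2)" by (simp only: powr_mult)
    also have "a * a * ?u = a * x" using a0 by simp
    finally show ?thesis .
  qed
  finally show ?thesis .
qed

lemma convex_powr_nonneg:
  fixes p :: real assumes p1: "p \<ge> 1"
  shows "convex_on {0..} (\<lambda>x. x powr p)"
proof (rule convex_onI)
  show "convex {0::real..}" by (simp add: convex_real_interval)
  fix t x y :: real assume t0: "t > 0" and t1: "t < 1" and x: "x \<in> {0..}" and y: "y \<in> {0..}"
  have pl: "s powr p \<le> s" if "0 < s" "s \<le> 1" for s using powr_le_one_le[OF that p1] .
  show "((1 - t) *\<^sub>R x + t *\<^sub>R y) powr p \<le> (1 - t) * x powr p + t * y powr p"
  proof (cases "x = 0")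
    case True
    have "(t*y) powr p = t powr p * y powr p" by (simp add: powr_mult)
    also have "\<dots> \<le> t * y powr p" using pl[of t] t0 t1 by (intro mult_right_mono) auto
    finally show ?thesis using True p1 by simp
  next
    case xF: False
    show ?thesis
    proof (cases "y = 0")
      case True
      have "((1-t)*x) powr p = (1-t) powr p * x powr p" by (simp add: powr_mult)
      also have "\<dots> \<le> (1-t) * x powr p" using pl[of "1-t"] t0 t1 by (intro mult_right_mono) auto
      finally show ?thesis using True p1 by simp
    next
      case False
      then show ?thesis using xF x y t0 t1 convex_onD[OF powr_convex[OF p1], of t x y] by auto
    qed
  qed
qed

lemma jensen_powr:
  fixes p :: real and V :: "'a set" and y :: "'a \<Rightarrow> real"
  assumes p1: "p \<ge> 1" and fin: "finite V" and ne: "V \<noteq> {}" and y0: "\<And>v. v \<in> V \<Longrightarrow> y v \<ge> 0"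
  shows "((\<Sum>v\<in>V. y v) / card V) powr p \<le> (\<Sum>v\<in>V. y v powr p) / card V"
proof -
  have c: "real (card V) > 0" using fin ne by (simp add: card_gt_0_iff)
  have "(\<lambda>x. x powr p) (\<Sum>v\<in>V. (1/card V) *\<^sub>R y v) \<le> (\<Sum>v\<in>V. (1/card V) * (\<lambda>x. x powr p) (y v))"
    by (rule convex_on_sum[OF fin ne convex_powr_nonneg[OF p1]]) (use c y0 in auto)
  then show ?thesis by (simp add: sum_distrib_left[symmetric] sum_divide_distrib[symmetric])
qed



lemma max_powr: "0 \<le> u \<Longrightarrow> 0 \<le> v \<Longrightarrow> 0 \<le> p \<Longrightarrow> (max u v) powr p = max (u powr p) (v powr p)"
  for u v p :: real
  by (cases "u \<le> v") (auto simp: max_def intro: powr_mono2 dest: powr_mono2[of p v u])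

lemma star_V_split: "n \<ge> 1 \<Longrightarrow> star_V n = insert 1 {2..n}" by (auto simp: star_V_def)

lemma sum_star: "n \<ge> 1 \<Longrightarrow> (\<Sum>v\<in>star_V n. h v) = h 1 + (\<Sum>i\<in>{2..n}. h i)"
  for h :: "nat \<Rightarrow> real"
  by (simp add: star_V_split)

lemma upper_sum:
  fixes n :: nat and p \<delta> c \<epsilon> r :: real and f :: "nat \<Rightarrow> real"
  assumes n16: "n \<ge> 16" and p1: "p \<ge> 1" and d0: "0 < \<delta>" and d1: "\<delta> < 1"
    and cdef: "c = (2-\<delta>)^2/(4*(1-\<delta>))" and edef: "\<epsilon> = (1-\<delta>/2) powr p" and rdef: "r = sqrt (real n)"
    and K1: "1 \<le> c powr p" and K4: "c powr p \<le> 4"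
  shows "(\<Sum>v\<in>star_V n. (maxop (star_V n) star_E f v) powr p)
     \<le> ((1+r)/2 + (c powr p - 1)*r^2 + n*\<epsilon>) * (\<Sum>v\<in>star_V n. \<bar>f v\<bar> powr p)"
proof -
  define a where "a = \<bar>f 1\<bar>"
  define A where "A = (\<Sum>u\<in>star_V n. \<bar>f u\<bar>) / real n"
  define \<alpha> where "\<alpha> = a powr p"
  define \<beta> where "\<beta> = (\<lambda>i. \<bar>f i\<bar> powr p)"
  define g where "g = A powr p"
  define K where "K = c powr p"
  define h where "h = (\<lambda>i. c powr (p/2) * (a * \<bar>f i\<bar>) powr (p/2))"
  define T where "T = (\<lambda>i. (maxop (star_V n) star_E f i) powr p - \<epsilon> * \<alpha>)"
  define I where "I = {2..n}"
  have n1: "n \<ge> 1" "n \<ge> 2" using n16 by auto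
  have p0: "p > 0" "p \<ge> 0" using p1 by auto
  have r4: "r \<ge> 4"
  proof -
    have "4 \<le> sqrt (real n)" by (rule real_le_rsqrt) (use n16 in simp)
    then show ?thesis by (simp add: rdef)
  qed
  have rn: "r^2 = real n" by (simp add: rdef)
  have cardI: "real (card I) = r^2 - 1" using n1 by (simp add: I_def rn of_nat_diff)
  have a0: "a \<ge> 0" "\<alpha> \<ge> 0" by (auto simp: a_def \<alpha>_def)
  have A0: "A \<ge> 0" by (simp add: A_def sum_nonneg)
  have e0: "\<epsilon> \<ge> 0" by (simp add: edef)
  have S_split: "(\<Sum>v\<in>star_V n. \<bar>f v\<bar> powr p) = \<alpha> + (\<Sum>i\<in>I. \<beta> i)"
    using n1 by (simp add: sum_star I_def \<alpha>_def a_def \<beta>_def)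
  have gS: "r^2 * g \<le> \<alpha> + (\<Sum>i\<in>I. \<beta> i)"
  proof -
    have "g \<le> (\<Sum>v\<in>star_V n. \<bar>f v\<bar> powr p) / card (star_V n)"
      unfolding g_def A_def using jensen_powr[OF p1, of "star_V n" "\<lambda>v. \<bar>f v\<bar>"] n1
      by (simp add: star_V_def)
    then have "real n * g \<le> (\<Sum>v\<in>star_V n. \<bar>f v\<bar> powr p)" using n1 by (simp add: field_simps)
    then show ?thesis using S_split rn by simp
  qed
  have T0: "(maxop (star_V n) star_E f 1) powr p \<le> max \<alpha> g"
  proof -
    have "maxop (star_V n) star_E f 1 = max a A" using maxop_center[OF n1(2), of f] by (simp only: a_def A_def)
    then show ?thesis using max_powr[of a A p] a0 A0 p0 by (simp add: \<alpha>_def g_def)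
  qed
  have Ti: "T i \<le> max (max (\<beta> i) (h i)) g" if i: "i \<in> I" for i
  proof -
    let ?x = "\<bar>f i\<bar>"
    have iV: "i \<in> {2..n}" using i by (simp add: I_def)
    have M: "(maxop (star_V n) star_E f i) powr p = max (max (?x powr p) (((?x+a)/2) powr p)) g"
    proof -
      have "maxop (star_V n) star_E f i = max (max ?x ((?x+a)/2)) A" using maxop_leaf[OF iV, of f] by (simp only: a_def A_def)
      moreover have m0: "0 \<le> max ?x ((?x+a)/2)" by (simp add: le_max_iff_disj)
      ultimately show ?thesis using max_powr[OF m0 A0 p0(2)] max_powr[of ?x "(?x+a)/2" p] a0 A0 p0
        by (simp add: g_def)
    qed
    have "((?x+a)/2) powr p \<le> max (\<beta> i) (h i) + \<epsilon> * \<alpha>"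
    proof (cases "?x \<le> a")
      case True
      have "((?x+a)/2) powr p \<le> h i + \<epsilon> * \<alpha>"
        using half_scaled[OF d0 d1 p0(1) _ True] by (simp add: h_def cdef edef \<alpha>_def)
      then show ?thesis using e0 a0 by (smt (verit) max.cobounded2)
    next
      case False
      have "((?x+a)/2) powr p \<le> ?x powr p" using False a0 p0 by (intro powr_mono2) auto
      then show ?thesis using e0 a0 by (simp add: \<beta>_def) (smt (verit) mult_nonneg_nonneg max.cobounded1)
    qed
    then have "(maxop (star_V n) star_E f i) powr p \<le> max (max (\<beta> i) (h i)) g + \<epsilon> * \<alpha>"
      unfolding M using e0 a0 by (simp add: \<beta>_def) (smt (verit) mult_nonneg_nonneg)
    then show ?thesis by (simp add: T_def)
  qed
  have h0: "h i \<ge> 0" for i by (simp add: h_def)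
  have sqp: "(y powr (p/2))^2 = y powr p" if "y \<ge> 0" for y :: real
    by (simp add: power2_eq_square powr_add[symmetric])
  have hsq: "(h i)^2 \<le> K*\<alpha>*\<beta> i" for i
  proof -
    have "(h i)^2 = (c powr (p/2))^2 * ((a * \<bar>f i\<bar>) powr (p/2))^2" by (simp add: h_def power_mult_distrib)
    also have "\<dots> = c powr p * (a * \<bar>f i\<bar>) powr p"
    proof -
      have c0: "c \<ge> 0" using d1 by (simp add: cdef)
      show ?thesis using sqp[OF c0] sqp[of "a * \<bar>f i\<bar>"] a0 by simp
    qed
    also have "\<dots> = K*\<alpha>*\<beta> i" by (simp add: K_def \<alpha>_def \<beta>_def powr_mult)
    finally show ?thesis by simp
  qed
  have b0: "\<beta> i \<ge> 0" for i by (simp add: \<beta>_def)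
  have g0: "g \<ge> 0" by (simp add: g_def)
  have KEY: "(maxop (star_V n) star_E f 1) powr p + (\<Sum>i\<in>I. T i) \<le> ((1+r)/2 + (K-1)*r^2) * (\<alpha> + (\<Sum>i\<in>I. \<beta> i))"
    by (rule key[OF r4 _ cardI a0(2) b0 h0 hsq g0 gS _ _ T0 Ti]) (use K1 K4 in \<open>auto simp: K_def I_def\<close>)
  have sumT: "(\<Sum>i\<in>I. T i) = (\<Sum>i\<in>I. (maxop (star_V n) star_E f i) powr p) - (r^2 - 1) * (\<epsilon> * \<alpha>)"
    by (simp add: T_def sum_subtractf cardI)
  have "(\<Sum>v\<in>star_V n. (maxop (star_V n) star_E f v) powr p)
      = (maxop (star_V n) star_E f 1) powr p + (\<Sum>i\<in>I. (maxop (star_V n) star_E f i) powr p)"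
    using n1 by (simp add: sum_star I_def)
  also have "\<dots> \<le> ((1+r)/2 + (K-1)*r^2) * (\<alpha> + (\<Sum>i\<in>I. \<beta> i)) + (r^2 - 1) * (\<epsilon> * \<alpha>)"
    using KEY sumT by simp
  also have "(r^2 - 1) * (\<epsilon> * \<alpha>) \<le> n * \<epsilon> * (\<alpha> + (\<Sum>i\<in>I. \<beta> i))"
  proof -
    have "(r^2 - 1) * (\<epsilon> * \<alpha>) \<le> n * (\<epsilon> * \<alpha>)" using rn e0 a0 by (simp add: mult_right_mono)
    also have "\<dots> \<le> n * (\<epsilon> * (\<alpha> + (\<Sum>i\<in>I. \<beta> i)))"
      using e0 b0 by (intro mult_left_mono) (auto simp: sum_nonneg)
    finally show ?thesis by simp
  qed
  finally show ?thesis using S_split by (simp add: K_def algebra_simps)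
qed



lemma lower_sum:
  fixes n :: nat and p r s :: real and f0 :: "nat \<Rightarrow> real"
  assumes n2: "n \<ge> 2" and p0: "p > 0"
    and rdef: "r = sqrt (real n)" and sdef: "s = 1/(1+r)"
    and fdef: "f0 = (\<lambda>v. if v = 1 then 1 else s powr (2/p))"
  shows "(1+r)/2 * (\<Sum>v\<in>star_V n. \<bar>f0 v\<bar> powr p) \<le> (\<Sum>v\<in>star_V n. (maxop (star_V n) star_E f0 v) powr p)"
proof -
  define x where "x = s powr (2/p)"
  have r0: "r \<ge> 0" by (simp add: rdef)
  have rn: "r^2 = real n" by (simp add: rdef)
  have s0: "s > 0" using r0 by (simp add: sdef)
  have x0: "x > 0" using s0 by (simp add: x_def)
  have n1: "n \<ge> 1" using n2 by simp
  have xp: "x powr p = s^2"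
  proof -
    have "x powr p = s powr (2/p*p)" by (simp add: x_def powr_powr)
    also have "2/p*p = 2" using p0 by simp
    finally show ?thesis using s0 by simp
  qed
  have xh: "x powr (p/2) = s"
  proof -
    have "x powr (p/2) = s powr (2/p*(p/2))" by (simp add: x_def powr_powr)
    also have "2/p*(p/2) = 1" using p0 by simp
    finally show ?thesis using s0 by simp
  qed
  have f1: "f0 1 = 1" by (simp add: fdef)
  have f1': "f0 (Suc 0) = 1" by (simp add: fdef)
  have fi: "f0 i = x" if "i \<in> {2..n}" for i using that by (simp add: fdef x_def)
  have den: "(\<Sum>v\<in>star_V n. \<bar>f0 v\<bar> powr p) = 1 + (real n - 1) * s^2"
    using n1 x0 by (simp add: sum_star f1 f1' fi xp of_nat_diff)
  have M1: "(maxop (star_V n) star_E f0 1) powr p \<ge> 1"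
  proof -
    have "maxop (star_V n) star_E f0 1 \<ge> 1" using maxop_center[OF n2, of f0] f1 by simp
    then show ?thesis using p0 by (simp add: ge_one_powr_ge_zero)
  qed
  have Mi: "(maxop (star_V n) star_E f0 i) powr p \<ge> s" if i: "i \<in> {2..n}" for i
  proof -
    have "sqrt x \<le> (x + 1)/2"
    proof -
      have "0 \<le> (sqrt x - 1)^2" by simp
      then show ?thesis using x0 by (simp add: power2_eq_square algebra_simps)
    qed
    also have "(x+1)/2 \<le> maxop (star_V n) star_E f0 i"
    proof -
      have "maxop (star_V n) star_E f0 i = max (max x ((x+1)/2)) ((\<Sum>u\<in>star_V n. \<bar>f0 u\<bar>) / real n)"
        using maxop_leaf[OF i, of f0] fi[OF i] f1' x0 by simp
      then show ?thesis by (metis max.cobounded1 max.cobounded2 order_trans)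
    qed
    finally have "sqrt x powr p \<le> (maxop (star_V n) star_E f0 i) powr p"
      using p0 x0 by (intro powr_mono2) auto
    moreover have "sqrt x powr p = s"
      using x0 xh by (simp add: powr_half_sqrt[symmetric] powr_powr)
    ultimately show ?thesis by simp
  qed
  have "1 + (real n - 1) * s \<le> (\<Sum>v\<in>star_V n. (maxop (star_V n) star_E f0 v) powr p)"
  proof -
    have "(\<Sum>i\<in>{2..n}. s) \<le> (\<Sum>i\<in>{2..n}. (maxop (star_V n) star_E f0 i) powr p)"
      by (rule sum_mono) (rule Mi)
    then show ?thesis using M1 n1 by (simp add: sum_star of_nat_diff)
  qed
  moreover have "(1+r)/2 * (1 + (real n - 1) * s^2) = 1 + (real n - 1) * s"
  proof -
    have "real n - 1 = (r - 1)*(r + 1)" using rn by (simp add: algebra_simps power2_eq_square)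
    then show ?thesis using r0 by (simp add: sdef field_simps power2_eq_square)
  qed
  ultimately show ?thesis using den by simp
qed

lemma norm_bounds:
  fixes V :: "'a set" and E and p U L :: real and f0 :: "'a \<Rightarrow> real" and v0 :: 'a
  assumes fin: "finite V" and p0: "p > 0" and L0: "L \<ge> 0"
    and mnn: "\<And>f v. v \<in> V \<Longrightarrow> maxop V E f v \<ge> 0"
    and up: "\<And>f. (\<Sum>v\<in>V. (maxop V E f v) powr p) \<le> U * (\<Sum>v\<in>V. \<bar>f v\<bar> powr p)"
    and v0: "v0 \<in> V" "f0 v0 \<noteq> 0"
    and low: "L * (\<Sum>v\<in>V. \<bar>f0 v\<bar> powr p) \<le> (\<Sum>v\<in>V. (maxop V E f0 v) powr p)"
  shows "L \<le> maxop_norm V E p powr p \<and> maxop_norm V E p powr p \<le> U"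
proof -
  let ?F = "{f. \<exists>v\<in>V. f v \<noteq> 0}"
  let ?R = "\<lambda>f. pnorm V p (maxop V E f) / pnorm V p f"
  have Spos: "(\<Sum>v\<in>V. \<bar>f v\<bar> powr p) > 0" if fF: "f \<in> ?F" for f
  proof -
    obtain v where v: "v \<in> V" "f v \<noteq> 0" using fF by blast
    have "0 < \<bar>f v\<bar> powr p" using v by simp
    also have "\<dots> \<le> (\<Sum>v\<in>V. \<bar>f v\<bar> powr p)" using fin v by (intro member_le_sum) auto
    finally show ?thesis .
  qed
  have Req: "?R f = ((\<Sum>v\<in>V. (maxop V E f v) powr p) / (\<Sum>v\<in>V. \<bar>f v\<bar> powr p)) powr (1/p)" for f
  proof -
    have "(\<Sum>v\<in>V. \<bar>maxop V E f v\<bar> powr p) = (\<Sum>v\<in>V. (maxop V E f v) powr p)"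
      using mnn by (intro sum.cong) auto
    then show ?thesis by (simp add: pnorm_def powr_divide)
  qed
  have U0: "U \<ge> 0"
  proof -
    have "0 < (\<Sum>v\<in>V. \<bar>f0 v\<bar> powr p)" using Spos[of f0] v0 by auto
    moreover have "0 \<le> (\<Sum>v\<in>V. (maxop V E f0 v) powr p)" by (simp add: sum_nonneg)
    ultimately show ?thesis using up[of f0] by (smt (verit) mult_neg_pos)
  qed
  have Rle: "?R f \<le> U powr (1/p)" if "f \<in> ?F" for f
  proof -
    have "(\<Sum>v\<in>V. (maxop V E f v) powr p) / (\<Sum>v\<in>V. \<bar>f v\<bar> powr p) \<le> U"
      using up[of f] Spos[OF that] by (simp add: divide_le_eq)
    then show ?thesis unfolding Req using p0 by (intro powr_mono2) (auto simp: sum_nonneg)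
  qed
  have f0F: "f0 \<in> ?F" using v0 by auto
  have R0: "L powr (1/p) \<le> ?R f0"
  proof -
    have "L \<le> (\<Sum>v\<in>V. (maxop V E f0 v) powr p) / (\<Sum>v\<in>V. \<bar>f0 v\<bar> powr p)"
      using low Spos[OF f0F] by (simp add: le_divide_eq)
    then show ?thesis unfolding Req using p0 L0 by (intro powr_mono2) auto
  qed
  have bdd: "bdd_above (?R ` ?F)" using Rle by (intro bdd_aboveI2) 
  have up1: "maxop_norm V E p \<le> U powr (1/p)"
    unfolding maxop_norm_def using f0F Rle by (intro cSUP_least) auto
  have lo1: "L powr (1/p) \<le> maxop_norm V E p"
    unfolding maxop_norm_def using R0 cSUP_upper[OF f0F bdd] by linarith
  have "(L powr (1/p)) powr p \<le> maxop_norm V E p powr p"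
    using lo1 p0 by (intro powr_mono2) auto
  moreover have "(L powr (1/p)) powr p = L" using p0 L0 by (simp add: powr_powr)
  moreover have "maxop_norm V E p powr p \<le> (U powr (1/p)) powr p"
    using up1 lo1 p0 by (intro powr_mono2) (auto intro: order_trans[OF powr_ge_zero])
  moreover have "(U powr (1/p)) powr p = U" using p0 U0 by (simp add: powr_powr)
  ultimately show ?thesis by simp
qed



lemma maxop_nonneg:
  assumes "n \<ge> 2" "v \<in> star_V n"
  shows "maxop (star_V n) star_E f v \<ge> 0"
proof (cases "v = 1")
  case True
  then show ?thesis using maxop_center[OF assms(1), of f] by (simp add: le_max_iff_disj)
next
  case False
  then have "v \<in> {2..n}" using assms(2) by (auto simp: star_V_def)
  then show ?thesis using maxop_leaf[of v n f] by (simp add: le_max_iff_disj)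
qed

theorem theorem3p6:
  fixes n :: nat
  assumes "n \<ge> 25"
  shows "((\<lambda>p. maxop_norm (star_V n) star_E p powr p) \<longlongrightarrow> (1 + sqrt (real n)) / 2) at_top"
proof -
  define r where "r = sqrt (real n)"
  define L where "L = (1+r)/2"
  define \<delta> where "\<delta> = (\<lambda>p::real. p powr (-2/3))"
  define c where "c = (\<lambda>p. (2 - \<delta> p)^2/(4*(1 - \<delta> p)))"
  define \<epsilon> where "\<epsilon> = (\<lambda>p. (1 - \<delta> p/2) powr p)"
  define U where "U = (\<lambda>p. L + (c p powr p - 1)*r^2 + real n * \<epsilon> p)"
  have n2: "n \<ge> 2" and n16: "n \<ge> 16" using assms by auto
  have limK: "((\<lambda>p. c p powr p) \<longlongrightarrow> 1) at_top" unfolding c_def \<delta>_def by real_asymp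
  have limE: "(\<epsilon> \<longlongrightarrow> 0) at_top" unfolding \<epsilon>_def \<delta>_def by real_asymp
  have limd: "(\<delta> \<longlongrightarrow> 0) at_top" unfolding \<delta>_def by real_asymp
  have "(U \<longlongrightarrow> L + (1-1)*r^2 + real n * 0) at_top"
    unfolding U_def by (intro tendsto_intros limK limE)
  then have limU: "(U \<longlongrightarrow> L) at_top" by simp
  have e2: "eventually (\<lambda>p. \<delta> p < 1) at_top" by (rule order_tendstoD(2)[OF limd]) simp
  have e3: "eventually (\<lambda>p. c p powr p < 4) at_top" by (rule order_tendstoD(2)[OF limK]) simp
  have ev: "eventually (\<lambda>p. 1 \<le> p \<and> \<delta> p < 1 \<and> c p powr p < 4) at_top"
    using eventually_ge_at_top[of "1::real"] e2 e3
    by eventually_elim auto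
  have main: "eventually (\<lambda>p. L \<le> maxop_norm (star_V n) star_E p powr p \<and> maxop_norm (star_V n) star_E p powr p \<le> U p) at_top"
    using ev
  proof eventually_elim
    case (elim p)
    then have p1: "1 \<le> p" and d1: "\<delta> p < 1" and K4: "c p powr p < 4" by auto
    have p0: "p > 0" using p1 by simp
    have d0: "0 < \<delta> p" using p0 by (simp add: \<delta>_def)
    have c1: "c p \<ge> 1"
    proof -
      have "4*(1 - \<delta> p) \<le> (2 - \<delta> p)^2" by (simp add: power2_eq_square algebra_simps)
      then show ?thesis using d1 by (simp add: c_def)
    qed
    have K1: "1 \<le> c p powr p" using c1 p0 by (simp add: ge_one_powr_ge_zero)
    have up: "(\<Sum>v\<in>star_V n. (maxop (star_V n) star_E f v) powr p) \<le> U p * (\<Sum>v\<in>star_V n. \<bar>f v\<bar> powr p)" for f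
    proof -
      have cd: "c p = (2 - \<delta> p)^2/(4*(1 - \<delta> p))" by (simp add: c_def)
      have ed: "\<epsilon> p = (1 - \<delta> p/2) powr p" by (simp add: \<epsilon>_def)
      show ?thesis
        using upper_sum[of n p "\<delta> p" "c p" "\<epsilon> p" r f, OF n16 p1 d0 d1 cd ed r_def K1] K4
        by (simp add: U_def L_def)
    qed
    define s where "s = 1/(1+r)"
    define f0 where "f0 = (\<lambda>v::nat. if v = 1 then 1 else s powr (2/p))"
    have low: "L * (\<Sum>v\<in>star_V n. \<bar>f0 v\<bar> powr p) \<le> (\<Sum>v\<in>star_V n. (maxop (star_V n) star_E f0 v) powr p)"
      using lower_sum[OF n2 p0 r_def s_def f0_def] by (simp add: L_def)
    have L0: "L \<ge> 0" by (simp add: L_def r_def)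
    have v0: "1 \<in> star_V n" "f0 1 \<noteq> 0" using n2 by (auto simp: star_V_def f0_def)
    have fin: "finite (star_V n)" by (simp add: star_V_def)
    show ?case
      by (rule norm_bounds[OF _ p0 L0 _ up v0 low]) (use fin maxop_nonneg[OF n2] in auto)
  qed
  have "((\<lambda>p. maxop_norm (star_V n) star_E p powr p) \<longlongrightarrow> L) at_top"
    by (rule tendsto_sandwich[OF _ _ tendsto_const limU]) (use main in \<open>auto elim: eventually_mono\<close>)
  then show ?thesis by (simp add: L_def r_def)
qed

end
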